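(* Let $g\in\mathcal{H}(\mathbb{D})$ and $n\in\mathbb{N}$. Then every $L\in\mathscr{A}_g^{(n)}$ admits an $ST$-decomposition, i.e. there exist constants $c_{j,k}\in\mathbb{C}$ and a polynomial $P$ of degree less than $n$ such that \[ L=\sum_{k=1}^n\sum_{j=0}^k c_{j,k}S_g^jT_g^{k-j}+g(0)P(g-g(0))\,\delta_0 . \]
   Context: $\mathcal{H}(\mathbb{D})$ is the space of analytic functions on the unit disc. For $g\in\mathcal{H}(\mathbb{D})$, operators on $\mathcal{H}(\mathbb{D})$: $M_gf=fg$, $T_gf(z)=\int_0^zf(\zeta)g'(\zeta)\,d\zeta$, $S_gf(z)=\int_0^zf'(\zeta)g(\zeta)\,d\zeta$, $\delta_0f=f(0)$; $h\,\delta_0$ denotes $f\mapsto f(0)h$; $S_g^0,T_g^0$ are the identity. A $g$-word with $m$ letters is a composition $L_1\cdots L_m$ with each $L_i\in\{M_g,S_g,T_g\}$; $\mathscr{A}_g^{(n)}$ is the linear span of $g$-words with at least one and at most $n$ letters. The zero polynomial is allowed. *)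

theory Defs
  imports "HOL-Complex_Analysis.Complex_Analysis" "HOL-Computational_Algebra.Polynomial"
begin

text \<open>Operators on analytic functions on the unit disc; functions are represented
  as complex functions, only their values on ball 0 1 matter.\<close>

definition Mop :: "(complex \<Rightarrow> complex) \<Rightarrow> (complex \<Rightarrow> complex) \<Rightarrow> (complex \<Rightarrow> complex)" where
  "Mop g f = (\<lambda>z. f z * g z)"

definition Top :: "(complex \<Rightarrow> complex) \<Rightarrow> (complex \<Rightarrow> complex) \<Rightarrow> (complex \<Rightarrow> complex)" where
  "Top g f = (\<lambda>z. contour_integral (linepath 0 z) (\<lambda>\<zeta>. f \<zeta> * deriv g \<zeta>))"

definition Sop :: "(complex \<Rightarrow> complex) \<Rightarrow> (complex \<Rightarrow> complex) \<Rightarrow> (complex \<Rightarrow> complex)" where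
  "Sop g f = (\<lambda>z. contour_integral (linepath 0 z) (\<lambda>\<zeta>. deriv f \<zeta> * g \<zeta>))"

datatype letter = LM | LS | LT

fun letter_op :: "(complex \<Rightarrow> complex) \<Rightarrow> letter \<Rightarrow> (complex \<Rightarrow> complex) \<Rightarrow> (complex \<Rightarrow> complex)" where
  "letter_op g LM = Mop g"
| "letter_op g LS = Sop g"
| "letter_op g LT = Top g"

fun word_op :: "(complex \<Rightarrow> complex) \<Rightarrow> letter list \<Rightarrow> (complex \<Rightarrow> complex) \<Rightarrow> (complex \<Rightarrow> complex)" where
  "word_op g [] = id"
| "word_op g (l # w) = letter_op g l \<circ> word_op g w"

definition words_upto :: "nat \<Rightarrow> letter list set" where
  "words_upto n = {w. 1 \<le> length w \<and> length w \<le> n}"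

text \<open>A general element of the linear span A_g^(n), given by coefficients a on the words.\<close>
definition span_op :: "(complex \<Rightarrow> complex) \<Rightarrow> nat \<Rightarrow> (letter list \<Rightarrow> complex)
    \<Rightarrow> (complex \<Rightarrow> complex) \<Rightarrow> (complex \<Rightarrow> complex)" where
  "span_op g n a f = (\<lambda>z. \<Sum>w\<in>words_upto n. a w * word_op g w f z)"

end

theory Submission
  imports Defs
begin

lemma prim0:
  fixes f :: "complex \<Rightarrow> complex"
  assumes hf: "f holomorphic_on ball 0 1" and x: "x \<in> ball 0 1"
  shows "((\<lambda>x. contour_integral (linepath 0 x) f) has_field_derivative f x) (at x)"
proof -
  let ?S = "ball (0::complex) 1"
  have contf: "continuous_on ?S f" using hf holomorphic_on_imp_continuous_on by blast
  have a_cs: "\<And>y. y \<in> ?S \<Longrightarrow> closed_segment 0 y \<subseteq> ?S"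
    by (meson centre_in_ball convex_ball convex_contains_segment zero_less_one)
  { fix b c :: complex
    assume "closed_segment b c \<subseteq> ?S"
    then have abcs: "convex hull {0, b, c} \<subseteq> ?S"
      using ends_in_segment[of b c] by (intro hull_minimal) (auto simp: convex_ball)
    then have "continuous_on (convex hull {0, b, c}) f"
      by (simp add: continuous_on_subset [OF contf])
    then have "(f has_contour_integral 0) (linepath 0 b +++ linepath b c +++ linepath c 0)"
      using abcs interior_subset hf
      by (force intro: Cauchy_theorem_triangle_cofinite [OF _ finite.emptyI] holomorphic_on_imp_differentiable_at)
  } note 0 = this
  show ?thesis
    using 0 a_cs contf has_chain_integral_chain_integral3 x
    by (intro triangle_contour_integrals_starlike_primitive[OF contf]) force+
qed

lemma T0 [simp]: "Top g u 0 = 0" by (simp add: Top_def)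
lemma S0 [simp]: "Sop g u 0 = 0" by (simp add: Sop_def)

lemma seg_sub: "z \<in> ball (0::complex) 1 \<Longrightarrow> closed_segment 0 z \<subseteq> ball 0 1"
  by (meson centre_in_ball convex_ball convex_contains_segment zero_less_one)

lemma T_cong: "(\<And>w. w \<in> ball 0 1 \<Longrightarrow> u w = v w) \<Longrightarrow> z \<in> ball 0 1 \<Longrightarrow> Top g u z = Top g v z"
  unfolding Top_def using seg_sub[of z] by (intro contour_integral_eq) auto

lemma S_cong: "(\<And>w. w \<in> ball 0 1 \<Longrightarrow> u w = v w) \<Longrightarrow> z \<in> ball 0 1 \<Longrightarrow> Sop g u z = Sop g v z"
  unfolding Sop_def
proof (intro contour_integral_eq)
  fix x assume h: "\<And>w. w \<in> ball 0 1 \<Longrightarrow> u w = v w" and z: "z \<in> ball 0 1"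
    and x: "x \<in> path_image (linepath 0 z)"
  then have xb: "x \<in> ball 0 1" using seg_sub[of z] by auto
  have "eventually (\<lambda>w. u w = v w) (nhds x)"
    using eventually_nhds_in_open[OF open_ball xb] h by (auto elim: eventually_mono)
  then have "deriv u x = deriv v x" by (rule deriv_cong_ev) simp
  then show "deriv u x * g x = deriv v x * g x" by simp
qed

lemma uniqB:
  assumes "\<And>z. z \<in> ball 0 1 \<Longrightarrow> (p has_field_derivative d z) (at z)"
    and "\<And>z. z \<in> ball 0 1 \<Longrightarrow> (q has_field_derivative d z) (at z)"
    and "p 0 = q 0" and z: "z \<in> ball (0::complex) 1"
  shows "p z = q z"
proof -
  have "\<exists>c. \<forall>x\<in>ball 0 1. p x - q x = c"
  proof (rule has_field_derivative_zero_constant)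
    fix x :: complex assume "x \<in> ball 0 1"
    then have "((\<lambda>x. p x - q x) has_field_derivative d x - d x) (at x)"
      using assms by (intro derivative_intros) auto
    then show "((\<lambda>x. p x - q x) has_field_derivative 0) (at x within ball 0 1)"
      by (simp add: has_field_derivative_at_within)
  qed simp
  then obtain c where c: "\<forall>x\<in>ball 0 1. p x - q x = c" by blast
  have "c = 0" using c[rule_format, of 0] assms(3) by simp
  then show ?thesis using c z by auto
qed

context
  fixes g :: "complex \<Rightarrow> complex"
  assumes hg: "g holomorphic_on ball 0 1"
begin

lemma hdg: "deriv g holomorphic_on ball 0 1"
  by (rule holomorphic_deriv[OF hg]) auto

lemma T_der: "u holomorphic_on ball 0 1 \<Longrightarrow> z \<in> ball 0 1 \<Longrightarrow>
   (Top g u has_field_derivative u z * deriv g z) (at z)"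
  unfolding Top_def by (rule prim0[where f="\<lambda>w. u w * deriv g w"]) (auto intro: holomorphic_intros hdg)

lemma S_der: "u holomorphic_on ball 0 1 \<Longrightarrow> z \<in> ball 0 1 \<Longrightarrow>
   (Sop g u has_field_derivative deriv u z * g z) (at z)"
  unfolding Sop_def by (rule prim0[where f="\<lambda>w. deriv u w * g w"])
     (auto intro!: holomorphic_intros hg holomorphic_deriv)

lemma hol_of_der: "(\<And>z. z \<in> ball 0 1 \<Longrightarrow> (p has_field_derivative d z) (at z)) \<Longrightarrow> p holomorphic_on ball 0 1"
  unfolding holomorphic_on_open[OF open_ball] by blast

lemma T_hol: "u holomorphic_on ball 0 1 \<Longrightarrow> Top g u holomorphic_on ball 0 1"
  by (rule hol_of_der, erule T_der)

lemma S_hol: "u holomorphic_on ball 0 1 \<Longrightarrow> Sop g u holomorphic_on ball 0 1"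
  by (rule hol_of_der, erule S_der)

lemma T_sum:
  assumes "finite A" "\<And>i. i \<in> A \<Longrightarrow> u i holomorphic_on ball 0 1" "z \<in> ball 0 1"
  shows "Top g (\<lambda>w. \<Sum>i\<in>A. k i * u i w) z = (\<Sum>i\<in>A. k i * Top g (u i) z)"
proof (rule uniqB[where d="\<lambda>z. (\<Sum>i\<in>A. k i * u i z) * deriv g z" and p="Top g (\<lambda>w. \<Sum>i\<in>A. k i * u i w)" and q="\<lambda>z. \<Sum>i\<in>A. k i * Top g (u i) z"])
  fix z :: complex assume z: "z \<in> ball 0 1"
  show "(Top g (\<lambda>w. \<Sum>i\<in>A. k i * u i w) has_field_derivative (\<Sum>i\<in>A. k i * u i z) * deriv g z) (at z)"
    using assms z by (intro T_der holomorphic_intros) auto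
  have "((\<lambda>z. \<Sum>i\<in>A. k i * Top g (u i) z) has_field_derivative (\<Sum>i\<in>A. k i * (u i z * deriv g z))) (at z)"
    using assms z by (intro DERIV_sum DERIV_cmult T_der) auto
  then show "((\<lambda>z. \<Sum>i\<in>A. k i * Top g (u i) z) has_field_derivative (\<Sum>i\<in>A. k i * u i z) * deriv g z) (at z)"
    by (rule DERIV_cong) (simp add: sum_distrib_right mult.assoc)
qed (use assms in auto)

lemma T_lin2:
  assumes "u holomorphic_on ball 0 1" "v holomorphic_on ball 0 1" "z \<in> ball 0 1"
  shows "Top g (\<lambda>w. u w + k * v w) z = Top g u z + k * Top g v z"
proof (rule uniqB[where d="\<lambda>z. (u z + k * v z) * deriv g z" and p="Top g (\<lambda>w. u w + k * v w)" and q="\<lambda>z. Top g u z + k * Top g v z"])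
  fix z :: complex assume z: "z \<in> ball 0 1"
  show "(Top g (\<lambda>w. u w + k * v w) has_field_derivative (u z + k * v z) * deriv g z) (at z)"
    using assms z by (intro T_der holomorphic_intros) auto
  have "((\<lambda>z. Top g u z + k * Top g v z) has_field_derivative (u z * deriv g z + k * (v z * deriv g z))) (at z)"
    using assms z by (intro DERIV_add DERIV_cmult T_der) auto
  then show "((\<lambda>z. Top g u z + k * Top g v z) has_field_derivative (u z + k * v z) * deriv g z) (at z)"
    by (rule DERIV_cong) (simp add: algebra_simps)
qed (use assms in auto)

lemma deriv_hol: "u holomorphic_on ball 0 1 \<Longrightarrow> z \<in> ball 0 1 \<Longrightarrow> (u has_field_derivative deriv u z) (at z)"
  by (rule holomorphic_derivI) auto

lemma S_sum:
  assumes "finite A" "\<And>i. i \<in> A \<Longrightarrow> u i holomorphic_on ball 0 1" "z \<in> ball 0 1"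
  shows "Sop g (\<lambda>w. \<Sum>i\<in>A. k i * u i w) z = (\<Sum>i\<in>A. k i * Sop g (u i) z)"
proof (rule uniqB[where d="\<lambda>z. (\<Sum>i\<in>A. k i * deriv (u i) z) * g z" and p="Sop g (\<lambda>w. \<Sum>i\<in>A. k i * u i w)" and q="\<lambda>z. \<Sum>i\<in>A. k i * Sop g (u i) z"])
  fix z :: complex assume z: "z \<in> ball 0 1"
  have "((\<lambda>w. \<Sum>i\<in>A. k i * u i w) has_field_derivative (\<Sum>i\<in>A. k i * deriv (u i) z)) (at z)"
    using assms z by (intro DERIV_sum DERIV_cmult deriv_hol) auto
  then have d: "deriv (\<lambda>w. \<Sum>i\<in>A. k i * u i w) z = (\<Sum>i\<in>A. k i * deriv (u i) z)"
    by (rule DERIV_imp_deriv)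
  show "(Sop g (\<lambda>w. \<Sum>i\<in>A. k i * u i w) has_field_derivative (\<Sum>i\<in>A. k i * deriv (u i) z) * g z) (at z)"
    using assms z d[symmetric] by (auto intro!: S_der holomorphic_intros)
  have "((\<lambda>z. \<Sum>i\<in>A. k i * Sop g (u i) z) has_field_derivative (\<Sum>i\<in>A. k i * (deriv (u i) z * g z))) (at z)"
    using assms z by (intro DERIV_sum DERIV_cmult S_der) auto
  then show "((\<lambda>z. \<Sum>i\<in>A. k i * Sop g (u i) z) has_field_derivative (\<Sum>i\<in>A. k i * deriv (u i) z) * g z) (at z)"
    by (rule DERIV_cong) (simp add: sum_distrib_right mult.assoc)
qed (use assms in auto)

lemma S_lin2:
  assumes "u holomorphic_on ball 0 1" "v holomorphic_on ball 0 1" "z \<in> ball 0 1"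
  shows "Sop g (\<lambda>w. u w + k * v w) z = Sop g u z + k * Sop g v z"
proof (rule uniqB[where d="\<lambda>z. (deriv u z + k * deriv v z) * g z" and p="Sop g (\<lambda>w. u w + k * v w)" and q="\<lambda>z. Sop g u z + k * Sop g v z"])
  fix z :: complex assume z: "z \<in> ball 0 1"
  have "((\<lambda>w. u w + k * v w) has_field_derivative (deriv u z + k * deriv v z)) (at z)"
    using assms z by (intro DERIV_add DERIV_cmult deriv_hol) auto
  then have d: "deriv (\<lambda>w. u w + k * v w) z = deriv u z + k * deriv v z"
    by (rule DERIV_imp_deriv)
  show "(Sop g (\<lambda>w. u w + k * v w) has_field_derivative (deriv u z + k * deriv v z) * g z) (at z)"
    using assms z d[symmetric] by (auto intro!: S_der holomorphic_intros)
  have "((\<lambda>z. Sop g u z + k * Sop g v z) has_field_derivative (deriv u z * g z + k * (deriv v z * g z))) (at z)"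
    using assms z by (intro DERIV_add DERIV_cmult S_der) auto
  then show "((\<lambda>z. Sop g u z + k * Sop g v z) has_field_derivative (deriv u z + k * deriv v z) * g z) (at z)"
    by (rule DERIV_cong) (simp add: algebra_simps)
qed (use assms in auto)

lemma I1:
  assumes "u holomorphic_on ball 0 1" "z \<in> ball 0 1"
  shows "Mop g u z = Sop g u z + Top g u z + g 0 * u 0"
  unfolding Mop_def
proof (rule uniqB[where d="\<lambda>z. deriv u z * g z + u z * deriv g z" and p="\<lambda>z. u z * g z" and q="\<lambda>z. Sop g u z + Top g u z + g 0 * u 0"])
  fix z :: complex assume z: "z \<in> ball 0 1"
  show "((\<lambda>z. u z * g z) has_field_derivative deriv u z * g z + u z * deriv g z) (at z)"
    using DERIV_mult[OF deriv_hol[OF assms(1) z] deriv_hol[OF hg z]] by (simp add: mult.commute)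
  show "((\<lambda>z. Sop g u z + Top g u z + g 0 * u 0) has_field_derivative deriv u z * g z + u z * deriv g z) (at z)"
    using DERIV_add[OF DERIV_add[OF S_der[OF assms(1) z] T_der[OF assms(1) z]] DERIV_const[of "g 0 * u 0"]]
    by simp
qed (use assms in auto)

lemma I3:
  assumes v: "v holomorphic_on ball 0 1" and z: "z \<in> ball 0 1"
  shows "Top g (Sop g v) z = Sop g (Top g v) z - Top g (Top g v) z - g 0 * v 0 * (g z - g 0)"
proof (rule uniqB[where d="\<lambda>z. Sop g v z * deriv g z" and p="Top g (Sop g v)"
      and q="\<lambda>z. Sop g (Top g v) z - Top g (Top g v) z - g 0 * v 0 * (g z - g 0)"])
  fix z :: complex assume z: "z \<in> ball 0 1"
  show "(Top g (Sop g v) has_field_derivative Sop g v z * deriv g z) (at z)"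
    using v z by (intro T_der S_hol)
  have dT: "deriv (Top g v) z = v z * deriv g z" using T_der[OF v z] by (rule DERIV_imp_deriv)
  have h: "((\<lambda>z. Sop g (Top g v) z - Top g (Top g v) z - g 0 * v 0 * (g z - g 0)) has_field_derivative
      deriv (Top g v) z * g z - Top g v z * deriv g z - g 0 * v 0 * (deriv g z - 0)) (at z)"
    by (intro DERIV_diff DERIV_cmult S_der T_der T_hol v z deriv_hol hg DERIV_const)
  have Se: "Sop g v z = v z * g z - Top g v z - g 0 * v 0" using I1[OF v z] by (simp add: Mop_def)
  have e: "v z * deriv g z * g z - Top g v z * deriv g z - g 0 * v 0 * (deriv g z - 0) = Sop g v z * deriv g z"
    unfolding Se by (simp add: algebra_simps)
  show "((\<lambda>z. Sop g (Top g v) z - Top g (Top g v) z - g 0 * v 0 * (g z - g 0)) has_field_derivative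
      Sop g v z * deriv g z) (at z)"
    using DERIV_cong[OF h[unfolded dT] e] .
qed (use z in auto)

lemma T_mono:
  assumes z: "z \<in> ball 0 1"
  shows "Top g (\<lambda>w. (g w - g 0) ^ r) z = (g z - g 0) ^ Suc r / of_nat (Suc r)"
proof (rule uniqB[where d="\<lambda>z. (g z - g 0) ^ r * deriv g z" and p="Top g (\<lambda>w. (g w - g 0) ^ r)"
      and q="\<lambda>z. (g z - g 0) ^ Suc r / of_nat (Suc r)"])
  fix z :: complex assume z: "z \<in> ball 0 1"
  show "(Top g (\<lambda>w. (g w - g 0) ^ r) has_field_derivative (g z - g 0) ^ r * deriv g z) (at z)"
    using z by (intro T_der holomorphic_intros hg)
  have "((\<lambda>z. (g z - g 0) ^ Suc r / of_nat (Suc r)) has_field_derivative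
     of_nat (Suc r) * ((deriv g z - 0) * (g z - g 0) ^ (Suc r - Suc 0)) / of_nat (Suc r)) (at z)"
    by (intro DERIV_cdivide DERIV_power DERIV_diff deriv_hol hg z DERIV_const)
  then show "((\<lambda>z. (g z - g 0) ^ Suc r / of_nat (Suc r)) has_field_derivative (g z - g 0) ^ r * deriv g z) (at z)"
    by (rule DERIV_cong) (simp del: of_nat_Suc)
qed (use z in auto)

lemma iter_hol: "u holomorphic_on ball 0 1 \<Longrightarrow> ((Sop g ^^ j) ((Top g ^^ i) u)) holomorphic_on ball 0 1"
proof -
  assume u: "u holomorphic_on ball 0 1"
  have "(Top g ^^ i) u holomorphic_on ball 0 1" by (induction i) (auto intro: T_hol u)
  then show ?thesis by (induction j) (auto intro: S_hol)
qed

end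

definition STs :: "(complex \<Rightarrow> complex) \<Rightarrow> nat \<Rightarrow> (nat \<Rightarrow> complex) \<Rightarrow> (complex \<Rightarrow> complex) \<Rightarrow> complex \<Rightarrow> complex" where
  "STs g m c u = (\<lambda>z. \<Sum>j\<in>{0..m}. c j * (Sop g ^^ j) ((Top g ^^ (m - j)) u) z)"

definition PG :: "(complex \<Rightarrow> complex) \<Rightarrow> nat \<Rightarrow> (nat \<Rightarrow> complex) \<Rightarrow> complex \<Rightarrow> complex" where
  "PG g m p = (\<lambda>z. \<Sum>r\<in>{..<m}. p r * (g z - g 0) ^ r)"

definition PolyG :: "(complex \<Rightarrow> complex) \<Rightarrow> nat \<Rightarrow> (complex \<Rightarrow> complex) \<Rightarrow> bool" where
  "PolyG g m h \<longleftrightarrow> (\<exists>p. \<forall>z\<in>ball 0 1. h z = PG g m p z)"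

definition GoodB :: "(complex \<Rightarrow> complex) \<Rightarrow> nat \<Rightarrow> nat \<Rightarrow> ((complex \<Rightarrow> complex) \<Rightarrow> complex \<Rightarrow> complex) \<Rightarrow> bool" where
  "GoodB g m b F \<longleftrightarrow> (\<exists>c p. (\<forall>j>b. c j = 0) \<and> (\<forall>u. u holomorphic_on ball 0 1 \<longrightarrow>
      (\<forall>z\<in>ball 0 1. F u z = STs g m c u z + g 0 * PG g m p z * u 0)))"

lemma PolyG_mono: "PolyG g m h \<Longrightarrow> m \<le> m' \<Longrightarrow> PolyG g m' h"
proof -
  assume "PolyG g m h" "m \<le> m'"
  then obtain p where p: "\<forall>z\<in>ball 0 1. h z = PG g m p z" by (auto simp: PolyG_def)
  have "PG g m' (\<lambda>r. if r < m then p r else 0) z = PG g m p z" for z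
  proof -
    have "PG g m' (\<lambda>r. if r < m then p r else 0) z = (\<Sum>r\<in>{..<m'}. if r \<in> {..<m} then p r * (g z - g 0) ^ r else 0)"
      unfolding PG_def by (intro sum.cong) auto
    also have "\<dots> = (\<Sum>r\<in>{..<m'} \<inter> {..<m}. p r * (g z - g 0) ^ r)"
      by (simp add: sum.inter_restrict)
    also have "{..<m'} \<inter> {..<m} = {..<m}" using \<open>m \<le> m'\<close> by auto
    finally show ?thesis by (simp add: PG_def)
  qed
  then show ?thesis using p unfolding PolyG_def by metis
qed

lemma PolyG_add: "PolyG g m h1 \<Longrightarrow> PolyG g m h2 \<Longrightarrow> PolyG g m (\<lambda>z. h1 z + k * h2 z)"
proof -
  assume "PolyG g m h1" "PolyG g m h2"
  then obtain p1 p2 where p: "\<forall>z\<in>ball 0 1. h1 z = PG g m p1 z" "\<forall>z\<in>ball 0 1. h2 z = PG g m p2 z"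
    by (auto simp: PolyG_def)
  have "PG g m (\<lambda>r. p1 r + k * p2 r) z = PG g m p1 z + k * PG g m p2 z" for z
    by (simp add: PG_def sum.distrib sum_distrib_left algebra_simps)
  then show ?thesis using p unfolding PolyG_def by (intro exI[of _ "\<lambda>r. p1 r + k * p2 r"]) auto
qed

lemma PolyG_const: "PolyG g (Suc m) (\<lambda>z. K)"
  unfolding PolyG_def PG_def
  by (intro exI[of _ "\<lambda>r. if r = 0 then K else 0"]) (simp add: sum.lessThan_Suc_shift del: sum.lessThan_Suc)

lemma PolyG_shift: "PolyG g m h \<Longrightarrow> PolyG g (Suc m) (\<lambda>z. (g z - g 0) * h z)"
proof -
  assume "PolyG g m h"
  then obtain p where p: "\<forall>z\<in>ball 0 1. h z = PG g m p z" by (auto simp: PolyG_def)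
  have "PG g (Suc m) (\<lambda>r. if r = 0 then 0 else p (r - 1)) z = (g z - g 0) * PG g m p z" for z
    by (simp add: PG_def sum.lessThan_Suc_shift sum_distrib_left algebra_simps del: sum.lessThan_Suc)
  then show ?thesis using p unfolding PolyG_def by (intro exI[of _ "\<lambda>r. if r = 0 then 0 else p (r - 1)"]) auto
qed

lemma PolyG_cong: "PolyG g m h \<Longrightarrow> (\<And>z. z \<in> ball 0 1 \<Longrightarrow> h' z = h z) \<Longrightarrow> PolyG g m h'"
  unfolding PolyG_def by auto

lemma PG_hol: "g holomorphic_on ball 0 1 \<Longrightarrow> PG g m p holomorphic_on ball 0 1"
  unfolding PG_def by (intro holomorphic_intros)

lemma PolyG_PG: "PolyG g m (PG g m p)"
  unfolding PolyG_def by auto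

lemma iter0: "((Sop g ^^ j) ((Top g ^^ i) u)) 0 = (if j = 0 \<and> i = 0 then u 0 else 0)"
  by (cases j; cases i) auto


context
  fixes g :: "complex \<Rightarrow> complex"
  assumes hg: "g holomorphic_on ball 0 1"
begin

lemma PolyG_T: "PolyG g m h \<Longrightarrow> PolyG g (Suc m) (Top g h)"
proof -
  assume "PolyG g m h"
  then obtain p where p: "\<forall>z\<in>ball 0 1. h z = PG g m p z" by (auto simp: PolyG_def)
  have "PolyG g (Suc m) (\<lambda>z. (g z - g 0) * PG g m (\<lambda>r. p r / of_nat (Suc r)) z)"
    by (intro PolyG_shift PolyG_PG)
  then show ?thesis
  proof (rule PolyG_cong)
    fix z :: complex assume z: "z \<in> ball 0 1"
    have "Top g h z = Top g (PG g m p) z" using p z by (intro T_cong) auto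
    also have "\<dots> = Top g (\<lambda>w. \<Sum>r\<in>{..<m}. p r * (\<lambda>r w. (g w - g 0) ^ r) r w) z"
      by (simp add: PG_def)
    also have "\<dots> = (\<Sum>r\<in>{..<m}. p r * Top g (\<lambda>w. (g w - g 0) ^ r) z)"
      using z by (intro T_sum hg) (auto intro!: holomorphic_intros hg)
    also have "\<dots> = (\<Sum>r\<in>{..<m}. p r * ((g z - g 0) ^ Suc r / of_nat (Suc r)))"
      using z by (intro sum.cong refl) (simp add: T_mono[OF hg z] del: of_nat_Suc power_Suc)
    also have "\<dots> = (g z - g 0) * PG g m (\<lambda>r. p r / of_nat (Suc r)) z"
      by (simp add: PG_def sum_distrib_left algebra_simps del: of_nat_Suc)
    finally show "Top g h z = (g z - g 0) * PG g m (\<lambda>r. p r / of_nat (Suc r)) z" .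
  qed
qed

lemma PolyG_M: "PolyG g m h \<Longrightarrow> PolyG g (Suc m) (Mop g h)"
proof -
  assume "PolyG g m h"
  then obtain p where p: "\<forall>z\<in>ball 0 1. h z = PG g m p z" by (auto simp: PolyG_def)
  have "PolyG g (Suc m) (\<lambda>z. (g z - g 0) * PG g m p z + g 0 * PG g m p z)"
    by (intro PolyG_add PolyG_shift PolyG_PG PolyG_mono[OF PolyG_PG]) simp
  then show ?thesis
    by (rule PolyG_cong) (use p in \<open>auto simp: Mop_def algebra_simps\<close>)
qed

lemma PolyG_S: "PolyG g m h \<Longrightarrow> PolyG g (Suc m) (Sop g h)"
proof -
  assume h: "PolyG g m h"
  then obtain p where p: "\<forall>z\<in>ball 0 1. h z = PG g m p z" by (auto simp: PolyG_def)
  have "PolyG g (Suc m) (\<lambda>z. Mop g (PG g m p) z + (-1) * Top g (PG g m p) z + (-1) * g 0 * PG g m p 0)"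
    by (intro PolyG_add PolyG_M PolyG_T PolyG_PG PolyG_const)
  then show ?thesis
  proof (rule PolyG_cong)
    fix z :: complex assume z: "z \<in> ball 0 1"
    have "Sop g h z = Sop g (PG g m p) z" using p z by (intro S_cong) auto
    also have "\<dots> = Mop g (PG g m p) z + (-1) * Top g (PG g m p) z + (-1) * g 0 * PG g m p 0"
      using I1[OF hg PG_hol[OF hg] z, of m p] by simp
    finally show "Sop g h z = Mop g (PG g m p) z + (-1) * Top g (PG g m p) z + (-1) * g 0 * PG g m p 0" .
  qed
qed

end


lemma GoodB_cong: "GoodB g m b F' \<Longrightarrow> (\<And>u z. u holomorphic_on ball 0 1 \<Longrightarrow> z \<in> ball 0 1 \<Longrightarrow> F u z = F' u z)
   \<Longrightarrow> GoodB g m b F"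
  unfolding GoodB_def by metis

lemma GoodB_mono: "GoodB g m b F \<Longrightarrow> b \<le> b' \<Longrightarrow> GoodB g m b' F"
  unfolding GoodB_def by (meson le_less_trans)

lemma GoodB_add: "GoodB g m b F1 \<Longrightarrow> GoodB g m b F2 \<Longrightarrow> GoodB g m b (\<lambda>u z. F1 u z + k * F2 u z)"
proof -
  assume "GoodB g m b F1" "GoodB g m b F2"
  then obtain c1 p1 c2 p2 where
    c: "\<forall>j>b. c1 j = 0" "\<forall>j>b. c2 j = 0" and
    e: "\<forall>u. u holomorphic_on ball 0 1 \<longrightarrow> (\<forall>z\<in>ball 0 1. F1 u z = STs g m c1 u z + g 0 * PG g m p1 z * u 0)"
       "\<forall>u. u holomorphic_on ball 0 1 \<longrightarrow> (\<forall>z\<in>ball 0 1. F2 u z = STs g m c2 u z + g 0 * PG g m p2 z * u 0)"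
    unfolding GoodB_def by metis
  have s1: "STs g m (\<lambda>j. c1 j + k * c2 j) u z = STs g m c1 u z + k * STs g m c2 u z" for u z
    by (simp add: STs_def sum.distrib sum_distrib_left algebra_simps)
  have s2: "PG g m (\<lambda>j. p1 j + k * p2 j) z = PG g m p1 z + k * PG g m p2 z" for z
    by (simp add: PG_def sum.distrib sum_distrib_left algebra_simps)
  show ?thesis unfolding GoodB_def
    by (rule exI[of _ "\<lambda>j. c1 j + k * c2 j"], rule exI[of _ "\<lambda>j. p1 j + k * p2 j"])
       (use c e in \<open>auto simp: s1 s2 algebra_simps\<close>)
qed

lemma GoodB_zero: "GoodB g m b (\<lambda>u z. 0)"
  unfolding GoodB_def by (rule exI[of _ "\<lambda>j. 0"], rule exI[of _ "\<lambda>j. 0"]) (simp add: STs_def PG_def)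

lemma GoodB_sum: "finite A \<Longrightarrow> (\<And>i. i \<in> A \<Longrightarrow> GoodB g m b (F i)) \<Longrightarrow>
   GoodB g m b (\<lambda>u z. \<Sum>i\<in>A. k i * F i u z)"
proof (induction A rule: finite_induct)
  case empty
  then show ?case by (simp add: GoodB_zero)
next
  case (insert x A)
  have "GoodB g m b (\<lambda>u z. (\<Sum>i\<in>A. k i * F i u z) + k x * F x u z)"
    using insert by (intro GoodB_add) auto
  then show ?case by (rule GoodB_cong) (use insert in \<open>simp add: algebra_simps\<close>)
qed

lemma GoodB_D: "PolyG g m h \<Longrightarrow> GoodB g m b (\<lambda>u z. g 0 * h z * u 0)"
  unfolding GoodB_def PolyG_def
  by (elim exE, rule exI[of _ "\<lambda>j. 0"], rule_tac exI) (auto simp: STs_def)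

lemma GoodB_base: "GoodB g 0 0 (\<lambda>u. u)"
  unfolding GoodB_def
  by (rule exI[of _ "\<lambda>j. if j = 0 then 1 else 0"], rule exI[of _ "\<lambda>j. 0"]) (simp add: STs_def PG_def)

lemma STs_Tright: "STs g (Suc m) (\<lambda>j. if j \<le> m then c j else 0) u z = STs g m c (Top g u) z"
proof -
  have "STs g (Suc m) (\<lambda>j. if j \<le> m then c j else 0) u z =
     (\<Sum>j\<in>{0..m}. (if j \<le> m then c j else 0) * (Sop g ^^ j) ((Top g ^^ (Suc m - j)) u) z)"
    by (simp add: STs_def)
  also have "\<dots> = STs g m c (Top g u) z"
    unfolding STs_def
  proof (intro sum.cong refl)
    fix j assume "j \<in> {0..m}"
    then have "Suc m - j = Suc (m - j)" by auto
    then show "(if j \<le> m then c j else 0) * (Sop g ^^ j) ((Top g ^^ (Suc m - j)) u) z =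
        c j * (Sop g ^^ j) ((Top g ^^ (m - j)) (Top g u)) z"
      using \<open>j \<in> {0..m}\<close> by (simp only: funpow_Suc_right o_apply) simp
  qed
  finally show ?thesis .
qed

context
  fixes g :: "complex \<Rightarrow> complex"
  assumes hg: "g holomorphic_on ball 0 1"
begin

lemma GoodB_Tright: "GoodB g m b F \<Longrightarrow> GoodB g (Suc m) b (\<lambda>u. F (Top g u))"
proof -
  assume "GoodB g m b F"
  then obtain c p where c: "\<forall>j>b. c j = 0" and
    e: "\<forall>u. u holomorphic_on ball 0 1 \<longrightarrow> (\<forall>z\<in>ball 0 1. F u z = STs g m c u z + g 0 * PG g m p z * u 0)"
    unfolding GoodB_def by metis
  show ?thesis unfolding GoodB_def
  proof (rule exI[of _ "\<lambda>j. if j \<le> m then c j else 0"], rule exI[of _ "\<lambda>j. 0"], intro conjI allI impI ballI)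
    fix j assume "b < j" then show "(if j \<le> m then c j else 0) = 0" using c by auto
  next
    fix u and z :: complex assume u: "u holomorphic_on ball 0 1" and z: "z \<in> ball 0 1"
    have "F (Top g u) z = STs g m c (Top g u) z"
      using e T_hol[OF hg u] z by auto
    then show "F (Top g u) z = STs g (Suc m) (\<lambda>j. if j \<le> m then c j else 0) u z + g 0 * PG g (Suc m) (\<lambda>j. 0) z * u 0"
      by (simp add: STs_Tright PG_def)
  qed
qed


lemma sum_delta0: "(\<Sum>j\<in>{0..n::nat}. (if j = 0 then 1 else 0) * f j) = (f 0 :: complex)"
  by (induction n) auto

lemma STs_hol: "u holomorphic_on ball 0 1 \<Longrightarrow> STs g m c u holomorphic_on ball 0 1"
  unfolding STs_def by (intro holomorphic_intros iter_hol[OF hg])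

lemma STs_S:
  assumes u: "u holomorphic_on ball 0 1" and z: "z \<in> ball 0 1"
  shows "Sop g (STs g m c u) z = STs g (Suc m) (\<lambda>j. if j = 0 then 0 else c (j - 1)) u z"
proof -
  have "Sop g (STs g m c u) z = Sop g (\<lambda>w. \<Sum>j\<in>{0..m}. c j * (\<lambda>j. (Sop g ^^ j) ((Top g ^^ (m - j)) u)) j w) z"
    by (simp add: STs_def)
  also have "\<dots> = (\<Sum>j\<in>{0..m}. c j * Sop g ((Sop g ^^ j) ((Top g ^^ (m - j)) u)) z)"
    using z by (intro S_sum hg iter_hol u) auto
  also have "\<dots> = STs g (Suc m) (\<lambda>j. if j = 0 then 0 else c (j - 1)) u z"
    unfolding STs_def sum.atLeast0_atMost_Suc_shift by simp
  finally show ?thesis .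
qed

lemma STs_T:
  assumes u: "u holomorphic_on ball 0 1" and z: "z \<in> ball 0 1"
  shows "Top g (STs g m c u) z = (\<Sum>j\<in>{0..m}. c j * Top g ((Sop g ^^ j) ((Top g ^^ (m - j)) u)) z)"
proof -
  have "Top g (STs g m c u) z = Top g (\<lambda>w. \<Sum>j\<in>{0..m}. c j * (\<lambda>j. (Sop g ^^ j) ((Top g ^^ (m - j)) u)) j w) z"
    by (simp add: STs_def)
  also have "\<dots> = (\<Sum>j\<in>{0..m}. c j * Top g ((Sop g ^^ j) ((Top g ^^ (m - j)) u)) z)"
    using z by (intro T_sum hg iter_hol u) auto
  finally show ?thesis .
qed

lemma STs0: "STs g m c u 0 = (if m = 0 then c 0 * u 0 else 0)"
  by (cases m) (auto simp: STs_def iter0 intro!: sum.neutral)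

lemma PG0: "PG g m p 0 = (if m = 0 then 0 else p 0)"
  by (cases m) (simp_all add: PG_def sum.lessThan_Suc_shift del: sum.lessThan_Suc)

lemma GoodB_S: "GoodB g m b F \<Longrightarrow> GoodB g (Suc m) (Suc b) (\<lambda>u. Sop g (F u))"
proof -
  assume "GoodB g m b F"
  then obtain c p where c: "\<forall>j>b. c j = 0" and
    e: "\<forall>u. u holomorphic_on ball 0 1 \<longrightarrow> (\<forall>z\<in>ball 0 1. F u z = STs g m c u z + g 0 * PG g m p z * u 0)"
    unfolding GoodB_def by metis
  obtain p' where p': "\<forall>z\<in>ball 0 1. Sop g (PG g m p) z = PG g (Suc m) p' z"
    using PolyG_S[OF hg PolyG_PG] unfolding PolyG_def by blast
  show ?thesis unfolding GoodB_def
  proof (rule exI[of _ "\<lambda>j. if j = 0 then 0 else c (j - 1)"], rule exI[of _ p'], intro conjI allI impI ballI)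
    fix j assume "Suc b < j" then show "(if j = 0 then 0 else c (j - 1)) = 0" using c by auto
  next
    fix u and z :: complex assume u: "u holomorphic_on ball 0 1" and z: "z \<in> ball 0 1"
    have "Sop g (F u) z = Sop g (\<lambda>w. STs g m c u w + (g 0 * u 0) * PG g m p w) z"
      using e u by (intro S_cong z) (auto simp: algebra_simps)
    also have "\<dots> = Sop g (STs g m c u) z + (g 0 * u 0) * Sop g (PG g m p) z"
      by (intro S_lin2 hg STs_hol PG_hol u z)
    also have "\<dots> = STs g (Suc m) (\<lambda>j. if j = 0 then 0 else c (j - 1)) u z + g 0 * PG g (Suc m) p' z * u 0"
      using p' z by (simp add: STs_S u z)
    finally show "Sop g (F u) z = STs g (Suc m) (\<lambda>j. if j = 0 then 0 else c (j - 1)) u z + g 0 * PG g (Suc m) p' z * u 0" .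
  qed
qed

lemma GT_gen:
  assumes F: "GoodB g m b F"
    and J: "\<And>j. j \<le> b \<Longrightarrow> j \<le> m \<Longrightarrow> GoodB g (Suc m) b' (\<lambda>u. Top g ((Sop g ^^ j) ((Top g ^^ (m - j)) u)))"
  shows "GoodB g (Suc m) b' (\<lambda>u. Top g (F u))"
proof -
  obtain c p where c: "\<forall>j>b. c j = 0" and
    e: "\<forall>u. u holomorphic_on ball 0 1 \<longrightarrow> (\<forall>z\<in>ball 0 1. F u z = STs g m c u z + g 0 * PG g m p z * u 0)"
    using F unfolding GoodB_def by metis
  define Fj where "Fj j = (if j \<le> b then (\<lambda>u. Top g ((Sop g ^^ j) ((Top g ^^ (m - j)) u))) else (\<lambda>u z. 0))" for j
  have "GoodB g (Suc m) b' (\<lambda>u z. (\<Sum>j\<in>{0..m}. c j * Fj j u z) + 1 * (g 0 * Top g (PG g m p) z * u 0))"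
    using J by (intro GoodB_add GoodB_sum GoodB_D PolyG_T PolyG_PG hg) (auto simp: Fj_def GoodB_zero)
  then show ?thesis
  proof (rule GoodB_cong)
    fix u and z :: complex assume u: "u holomorphic_on ball 0 1" and z: "z \<in> ball 0 1"
    have "Top g (F u) z = Top g (\<lambda>w. STs g m c u w + (g 0 * u 0) * PG g m p w) z"
      using e u by (intro T_cong z) (auto simp: algebra_simps)
    also have "\<dots> = Top g (STs g m c u) z + (g 0 * u 0) * Top g (PG g m p) z"
      by (intro T_lin2 hg STs_hol PG_hol u z)
    also have "Top g (STs g m c u) z = (\<Sum>j\<in>{0..m}. c j * Fj j u z)"
      unfolding STs_T[OF u z] using c by (intro sum.cong refl) (auto simp: Fj_def)
    finally show "Top g (F u) z = (\<Sum>j\<in>{0..m}. c j * Fj j u z) + 1 * (g 0 * Top g (PG g m p) z * u 0)"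
      by simp
  qed
qed

lemma GTS: "GoodB g (x + y + 1) x (\<lambda>u. Top g ((Sop g ^^ x) ((Top g ^^ y) u)))"
proof (induction x arbitrary: y rule: less_induct)
  case (less x)
  show ?case
  proof (cases x)
    case 0
    show ?thesis unfolding GoodB_def 0
      by (rule exI[of _ "\<lambda>j. if j = 0 then 1 else 0"], rule exI[of _ "\<lambda>j. 0"])
         (simp add: STs_def PG_def sum_delta0)
  next
    case (Suc x')
    define V where "V u = (Sop g ^^ x') ((Top g ^^ y) u)" for u
    have IH: "GoodB g (x' + y + 1) x' (\<lambda>u. Top g (V u))"
      unfolding V_def using less Suc by auto
    have A: "GoodB g (Suc (x' + y + 1)) (Suc x') (\<lambda>u. Sop g (Top g (V u)))"
      by (rule GoodB_S[OF IH])
    have B: "GoodB g (Suc (x' + y + 1)) x' (\<lambda>u. Top g (Top g (V u)))"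
    proof (rule GT_gen[OF IH])
      fix j assume j: "j \<le> x'" "j \<le> x' + y + 1"
      have "GoodB g (j + (x' + y + 1 - j) + 1) j (\<lambda>u. Top g ((Sop g ^^ j) ((Top g ^^ (x' + y + 1 - j)) u)))"
        using less.IH[of j "x' + y + 1 - j"] Suc j by auto
      moreover have "j + (x' + y + 1 - j) + 1 = Suc (x' + y + 1)" using j by auto
      ultimately show "GoodB g (Suc (x' + y + 1)) x' (\<lambda>u. Top g ((Sop g ^^ j) ((Top g ^^ (x' + y + 1 - j)) u)))"
        using j by (auto intro: GoodB_mono)
    qed
    define K where "K = (if x' = 0 \<and> y = 0 then 1 else (0::complex))"
    have C: "GoodB g (Suc (x' + y + 1)) (Suc x') (\<lambda>u z. g 0 * ((g z - g 0) * K) * u 0)"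
      using PolyG_const[of g "x' + y" K] by (intro GoodB_D PolyG_shift) simp
    have "GoodB g (Suc (x' + y + 1)) (Suc x') (\<lambda>u z. (Sop g (Top g (V u)) z + (-1) * Top g (Top g (V u)) z)
        + (-1) * (g 0 * ((g z - g 0) * K) * u 0))"
      by (intro GoodB_add A C GoodB_mono[OF B]) auto
    moreover have eqm: "Suc x' + y + 1 = Suc (x' + y + 1)" by simp
    ultimately show ?thesis unfolding Suc eqm
    proof (elim GoodB_cong)
      fix u and z :: complex assume u: "u holomorphic_on ball 0 1" and z: "z \<in> ball 0 1"
      have Vh: "V u holomorphic_on ball 0 1" unfolding V_def by (rule iter_hol[OF hg u])
      have V0: "V u 0 = K * u 0" by (simp add: V_def iter0 K_def)
      have "Top g ((Sop g ^^ Suc x') ((Top g ^^ y) u)) z = Top g (Sop g (V u)) z"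
        by (simp add: V_def)
      also have "\<dots> = Sop g (Top g (V u)) z - Top g (Top g (V u)) z - g 0 * V u 0 * (g z - g 0)"
        by (rule I3[OF hg Vh z])
      finally show "Top g ((Sop g ^^ Suc x') ((Top g ^^ y) u)) z = Sop g (Top g (V u)) z + - 1 * Top g (Top g (V u)) z +
          - 1 * (g 0 * ((g z - g 0) * K) * u 0)"
        unfolding V0 by (simp add: algebra_simps)
    qed
  qed
qed

lemma GoodB_T: "GoodB g m m F \<Longrightarrow> GoodB g (Suc m) (Suc m) (\<lambda>u. Top g (F u))"
proof (erule GT_gen)
  fix j assume j: "j \<le> m"
  have "GoodB g (j + (m - j) + 1) j (\<lambda>u. Top g ((Sop g ^^ j) ((Top g ^^ (m - j)) u)))"
    by (rule GTS)
  then show "GoodB g (Suc m) (Suc m) (\<lambda>u. Top g ((Sop g ^^ j) ((Top g ^^ (m - j)) u)))"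
    using j by (auto intro: GoodB_mono)
qed

lemma GoodB_M: "GoodB g m m F \<Longrightarrow> GoodB g (Suc m) (Suc m) (\<lambda>u. Mop g (F u))"
proof -
  assume F: "GoodB g m m F"
  then obtain c p where
    e: "\<forall>u. u holomorphic_on ball 0 1 \<longrightarrow> (\<forall>z\<in>ball 0 1. F u z = STs g m c u z + g 0 * PG g m p z * u 0)"
    unfolding GoodB_def by metis
  define K where "K = (if m = 0 then c 0 else 0) + g 0 * (if m = 0 then 0 else p 0)"
  have "GoodB g (Suc m) (Suc m) (\<lambda>u z. (Sop g (F u) z + 1 * Top g (F u) z) + 1 * (g 0 * (\<lambda>z. K) z * u 0))"
    by (intro GoodB_add GoodB_S[OF F] GoodB_T[OF F] GoodB_D PolyG_const)
  then show ?thesis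
  proof (rule GoodB_cong)
    fix u and z :: complex assume u: "u holomorphic_on ball 0 1" and z: "z \<in> ball 0 1"
    define X where "X = (\<lambda>w. STs g m c u w + g 0 * PG g m p w * u 0)"
    have Xh: "X holomorphic_on ball 0 1" unfolding X_def
      by (intro holomorphic_intros STs_hol PG_hol hg u)
    have FX: "\<And>w. w \<in> ball 0 1 \<Longrightarrow> F u w = X w" using e u by (auto simp: X_def)
    have X0: "X 0 = K * u 0" by (simp add: X_def STs0 PG0 K_def algebra_simps)
    have "Mop g (F u) z = Mop g X z" using FX z by (simp add: Mop_def)
    also have "\<dots> = Sop g X z + Top g X z + g 0 * X 0" by (rule I1[OF hg Xh z])
    also have "Sop g X z = Sop g (F u) z" using FX z by (intro S_cong) auto
    also have "Top g X z = Top g (F u) z" using FX z by (intro T_cong) auto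
    finally show "Mop g (F u) z = (Sop g (F u) z + 1 * Top g (F u) z) + 1 * (g 0 * (\<lambda>z. K) z * u 0)"
      unfolding X0 by (simp add: algebra_simps)
  qed
qed

lemma GoodB_word: "GoodB g (length w) (length w) (word_op g w)"
proof (induction w)
  case Nil
  show ?case using GoodB_base by (simp add: id_def)
next
  case (Cons l w)
  show ?case
  proof (cases l)
    case LM
    then show ?thesis using GoodB_M[OF Cons.IH] by (simp add: comp_def)
  next
    case LS
    then show ?thesis using GoodB_S[OF Cons.IH] by (simp add: comp_def)
  next
    case LT
    then show ?thesis using GoodB_T[OF Cons.IH] by (simp add: comp_def)
  qed
qed

end


definition FinalF :: "(complex \<Rightarrow> complex) \<Rightarrow> nat \<Rightarrow> ((complex \<Rightarrow> complex) \<Rightarrow> complex \<Rightarrow> complex) \<Rightarrow> bool" where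
  "FinalF g n F \<longleftrightarrow> (\<exists>(c :: nat \<Rightarrow> nat \<Rightarrow> complex) (P :: complex poly).
           (P = 0 \<or> degree P < n) \<and>
           (\<forall>f. f holomorphic_on ball 0 1 \<longrightarrow>
              (\<forall>z \<in> ball 0 1.
                 F f z =
                   (\<Sum>k = 1..n. \<Sum>j = 0..k. c j k * ((Sop g ^^ j) ((Top g ^^ (k - j)) f)) z)
                   + g 0 * poly P (g z - g 0) * f 0)))"

lemma FinalF_zero: "FinalF g n (\<lambda>u z. 0)"
  unfolding FinalF_def by (rule exI[of _ "\<lambda>j k. 0"], rule exI[of _ 0]) simp

lemma FinalF_add: "FinalF g n F1 \<Longrightarrow> FinalF g n F2 \<Longrightarrow> FinalF g n (\<lambda>u z. F1 u z + k * F2 u z)"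
proof -
  assume h1: "FinalF g n F1" and h2: "FinalF g n F2"
  obtain c1 P1 where d1: "P1 = 0 \<or> degree P1 < n" and
    e1: "\<forall>f. f holomorphic_on ball 0 1 \<longrightarrow> (\<forall>z \<in> ball 0 1. F1 f z =
         (\<Sum>k = 1..n. \<Sum>j = 0..k. c1 j k * ((Sop g ^^ j) ((Top g ^^ (k - j)) f)) z) + g 0 * poly P1 (g z - g 0) * f 0)"
    using h1 unfolding FinalF_def by blast
  obtain c2 P2 where d2: "P2 = 0 \<or> degree P2 < n" and
    e2: "\<forall>f. f holomorphic_on ball 0 1 \<longrightarrow> (\<forall>z \<in> ball 0 1. F2 f z =
         (\<Sum>k = 1..n. \<Sum>j = 0..k. c2 j k * ((Sop g ^^ j) ((Top g ^^ (k - j)) f)) z) + g 0 * poly P2 (g z - g 0) * f 0)"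
    using h2 unfolding FinalF_def by blast
  note d = d1 d2 and e = e1 e2
  have deg: "P1 + smult k P2 = 0 \<or> degree (P1 + smult k P2) < n"
  proof (cases "n = 0")
    case True then show ?thesis using d by auto
  next
    case False
    have "degree P1 < n" "degree P2 < n" using d False by auto
    then have "degree (P1 + smult k P2) < n"
      using degree_add_le_max[of P1 "smult k P2"] degree_smult_le[of k P2] by linarith
    then show ?thesis by auto
  qed
  show ?thesis unfolding FinalF_def
    by (rule exI[of _ "\<lambda>j i. c1 j i + k * c2 j i"], rule exI[of _ "P1 + smult k P2"])
       (use deg e in \<open>auto simp: sum.distrib sum_distrib_left algebra_simps\<close>)
qed

lemma FinalF_sum: "finite A \<Longrightarrow> (\<And>i. i \<in> A \<Longrightarrow> FinalF g n (F i)) \<Longrightarrow>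
   FinalF g n (\<lambda>u z. \<Sum>i\<in>A. k i * F i u z)"
proof (induction A rule: finite_induct)
  case empty
  then show ?case by (simp add: FinalF_zero)
next
  case (insert x A)
  have "FinalF g n (\<lambda>u z. (\<Sum>i\<in>A. k i * F i u z) + k x * F x u z)"
    using insert by (intro FinalF_add) auto
  then show ?case using insert by (simp add: algebra_simps)
qed

lemma degree_PGpoly: "degree (\<Sum>r<m. monom (p r) r) \<le> m - 1"
  by (rule degree_sum_le) (auto intro: order.trans[OF degree_monom_le])

lemma FinalF_of_Good:
  assumes G: "GoodB g m m F" and m: "1 \<le> m" "m \<le> n"
  shows "FinalF g n F"
proof -
  obtain c p where
    e: "\<forall>u. u holomorphic_on ball 0 1 \<longrightarrow> (\<forall>z\<in>ball 0 1. F u z = STs g m c u z + g 0 * PG g m p z * u 0)"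
    using G unfolding GoodB_def by metis
  define P where "P = (\<Sum>r<m. monom (p r) r)"
  have dP: "degree P < n" using degree_PGpoly[where m=m and p=p] m unfolding P_def by linarith
  have PP: "poly P x = PG g m p z" if "x = g z - g 0" for x z
    using that by (simp add: P_def PG_def poly_sum poly_monom)
  have SS: "(\<Sum>k = 1..n. \<Sum>j = 0..k. (if k = m then c j else 0) * ((Sop g ^^ j) ((Top g ^^ (k - j)) u)) z)
      = STs g m c u z" for u z
  proof -
    have "(\<Sum>k = 1..n. \<Sum>j = 0..k. (if k = m then c j else 0) * ((Sop g ^^ j) ((Top g ^^ (k - j)) u)) z)
       = (\<Sum>k = 1..n. if k = m then (\<Sum>j = 0..k. c j * ((Sop g ^^ j) ((Top g ^^ (k - j)) u)) z) else 0)"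
      by (intro sum.cong refl) auto
    also have "\<dots> = STs g m c u z" using m by (simp add: STs_def)
    finally show ?thesis .
  qed
  show ?thesis unfolding FinalF_def
  proof (rule exI[of _ "\<lambda>j k. if k = m then c j else 0"], rule exI[of _ P], intro conjI allI impI ballI)
    show "P = 0 \<or> degree P < n" using dP by simp
  next
    fix f and z :: complex assume f: "f holomorphic_on ball 0 1" and z: "z \<in> ball 0 1"
    show "F f z = (\<Sum>k = 1..n. \<Sum>j = 0..k. (if k = m then c j else 0) * ((Sop g ^^ j) ((Top g ^^ (k - j)) f)) z)
                   + g 0 * poly P (g z - g 0) * f 0"
      unfolding SS PP[OF refl] using e f z by simp
  qed
qed

lemma finite_words: "finite (words_upto n)"
proof -
  have U: "(UNIV :: letter set) = {LM, LS, LT}"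
    by (auto intro: letter.exhaust)
  have "words_upto n \<subseteq> {xs. set xs \<subseteq> UNIV \<and> length xs \<le> n}" by (auto simp: words_upto_def)
  moreover have "finite {xs. set xs \<subseteq> (UNIV :: letter set) \<and> length xs \<le> n}"
    by (rule finite_lists_length_le) (simp add: U)
  ultimately show ?thesis by (rule finite_subset)
qed

theorem proposition3p6:
  fixes g :: "complex \<Rightarrow> complex" and n :: nat and a :: "letter list \<Rightarrow> complex"
  assumes "g holomorphic_on ball 0 1"
  shows "\<exists>(c :: nat \<Rightarrow> nat \<Rightarrow> complex) (P :: complex poly).
           (P = 0 \<or> degree P < n) \<and>
           (\<forall>f. f holomorphic_on ball 0 1 \<longrightarrow>
              (\<forall>z \<in> ball 0 1.
                 span_op g n a f z =
                   (\<Sum>k = 1..n. \<Sum>j = 0..k. c j k * ((Sop g ^^ j) ((Top g ^^ (k - j)) f)) z)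
                   + g 0 * poly P (g z - g 0) * f 0))"
proof -
  have "FinalF g n (\<lambda>u z. \<Sum>w\<in>words_upto n. a w * word_op g w u z)"
  proof (rule FinalF_sum[OF finite_words])
    fix w assume "w \<in> words_upto n"
    then show "FinalF g n (word_op g w)"
      using GoodB_word[OF assms, of w] by (intro FinalF_of_Good) (auto simp: words_upto_def)
  qed
  then show ?thesis unfolding FinalF_def span_op_def .
qed

end
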